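(* Consider Algorithm 1 (described in the context) run on a strongly connected digraph $\mathcal{G}_d$ with edge bounds $1\le l_{ji}\le u_{ji}$, under any realization of transmission delays bounded by $\overline{\tau}<\infty$, and assume the integer circulation conditions hold: (i) $\lceil l_{ji}\rceil\le\lfloor u_{ji}\rfloor$ for every $(v_j,v_i)\in\mathcal{E}$, and (ii) for every $\mathcal{S}\subset\mathcal{V}$, $\sum_{(v_j,v_i)\in\mathcal{E}^-_{\mathcal{S}}}\lceil l_{ji}\rceil\le\sum_{(v_l,v_j)\in\mathcal{E}^+_{\mathcal{S}}}\lfloor u_{lj}\rfloor$. Then there exists $k_0$ such that for all $k\ge k_0$: $f_{ji}[k]=f_{ji}[k_0]$ with $l_{ji}\le f_{ji}[k]\le u_{ji}$ for every $(v_j,v_i)\in\mathcal{E}$, and $b_j[k]=0$ for every $v_j\in\mathcal{V}$.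
   Context: Setting: $\mathcal{G}_d=(\mathcal{V},\mathcal{E})$ is a strongly connected digraph, $\mathcal{V}=\{v_1,\dots,v_n\}$, $n\ge2$; an edge $(v_j,v_i)$ carries flow from $v_i$ to $v_j$. $\mathcal{N}_j^-=\{v_i:(v_j,v_i)\in\mathcal{E}\}$, $\mathcal{N}_j^+=\{v_l:(v_l,v_j)\in\mathcal{E}\}$, $\mathcal{D}_j=|\mathcal{N}_j^-|+|\mathcal{N}_j^+|$. For $\mathcal{S}\subset\mathcal{V}$: $\mathcal{E}^-_{\mathcal{S}}=\{(v_j,v_i)\in\mathcal{E}: v_j\in\mathcal{S},\ v_i\notin\mathcal{S}\}$, $\mathcal{E}^+_{\mathcal{S}}=\{(v_l,v_j)\in\mathcal{E}: v_j\in\mathcal{S},\ v_l\notin\mathcal{S}\}$. Each edge has real bounds $1\le l_{ji}\le u_{ji}$. Communication is bidirectional along every edge. Projection: $[x]_{ji}=\max\{\lceil l_{ji}\rceil,\min\{\lfloor u_{ji}\rfloor,x\}\}$. State: for each edge $(v_l,v_j)$, the tail $v_j$ holds the actual flow $f_{lj}[k]$; for each edge $(v_j,v_i)$, the head $v_j$ holds a perceived flow $f^{(p)}_{ji}[k]$. Actual balance $b_j[k]=\sum_{v_i\in\mathcal{N}_j^-}f_{ji}[k]-\sum_{v_l\in\mathcal{N}_j^+}f_{lj}[k]$; perceived balance $b^{(p)}_j[k]=\sum_{v_i\in\mathcal{N}_j^-}f^{(p)}_{ji}[k]-\sum_{v_l\in\mathcal{N}_j^+}f_{lj}[k]$. Algorithm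 1. Initialization: $f_{ji}[0]=f^{(p)}_{ji}[0]=\lceil l_{ji}\rceil$ for all edges; each $v_j$ fixes a cyclic order of its $\mathcal{D}_j$ incident (incoming and outgoing) edges and a pointer into it. Iteration $k=0,1,2,\dots$, at each node $v_j$: (1) compute $b^{(p)}_j[k]$. (2) If $b^{(p)}_j[k]>0$, starting at the pointer and cycling through the order, visit edges one at a time: at an outgoing edge $(v_l,v_j)$, if $f_{lj}[k]+c^{(j)}_{lj}[k]<\lfloor u_{lj}\rfloor$ add $1$ to $c^{(j)}_{lj}[k]$; at an incoming edge $(v_j,v_i)$, if $f^{(p)}_{ji}[k]+c^{(j)}_{ji}[k]>\lceil l_{ji}\rceil$ subtract $1$ from $c^{(j)}_{ji}[k]$ (the $c$'s start at $0$; edges at their limit are skipped); stop as soon as the total number of unit changes equals $b^{(p)}_j[k]$, leaving the pointer at the next edge. If $b^{(p)}_j[k]\le 0$, all $c^{(j)}[k]=0$. (3) $v_j$ transmits $c^{(j)}_{lj}[k]$ to each out-neighbor $v_l$ and $c^{(j)}_{ji}[k]$ to each in-neighbor $v_i$. A message sent at step $k$ over a link in a given direction is delivered at step $k+\tau$, where the integer $\tau\in[0,\overline{\tau}]$ is arbitrary (unknown, time-varying, independent across links and directions). (4) $v_j$ forms $\overline{c}^{(l)}_{lj}[k]$ (resp. $\overline{c}^{(i)}_{ji}[k]$) as the sum of all values $c^{(l)}_{lj}[k_0]$ (resp. $c^{(i)}_{ji}[k_0]$) sent by $v_l$ (resp. $v_i$) that are delivered at step $k$ (zero if none). (5)–(6)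 $f_{lj}[k+1]=[f_{lj}[k]+c^{(j)}_{lj}[k]+\overline{c}^{(l)}_{lj}[k]]_{lj}$ and $f^{(p)}_{ji}[k+1]=[f^{(p)}_{ji}[k]+c^{(j)}_{ji}[k]+\overline{c}^{(i)}_{ji}[k]]_{ji}$. *)

theory Defs
  imports Complex_Main
begin

text \<open>An edge (j,i) in E carries flow from i to j; i is its tail, j its head.
  Flows on edges are functions of type ('v \<times> 'v) \<Rightarrow> int (only values on E matter).\<close>

text \<open>Entries of a node's cyclic order of incident edges:
  at node j, OutE v stands for the outgoing edge (v,j), InE v for the incoming edge (j,v).\<close>
datatype 'v inc = OutE 'v | InE 'v

definition incident :: "('v \<times> 'v) set \<Rightarrow> 'v \<Rightarrow> 'v inc set" where
  "incident E j = {OutE v | v. (v, j) \<in> E} \<union> {InE v | v. (j, v) \<in> E}"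

definition proj :: "real \<Rightarrow> real \<Rightarrow> int \<Rightarrow> int" where
  "proj lo up x = max \<lceil>lo\<rceil> (min \<lfloor>up\<rfloor> x)"

definition bal :: "('v \<times> 'v) set \<Rightarrow> ('v \<times> 'v \<Rightarrow> int) \<Rightarrow> 'v \<Rightarrow> int" where
  "bal E f j = (\<Sum>i\<in>{i. (j, i) \<in> E}. f (j, i)) - (\<Sum>v\<in>{v. (v, j) \<in> E}. f (v, j))"

definition pbal :: "('v \<times> 'v) set \<Rightarrow> ('v \<times> 'v \<Rightarrow> int) \<Rightarrow> ('v \<times> 'v \<Rightarrow> int) \<Rightarrow> 'v \<Rightarrow> int" where
  "pbal E f fp j = (\<Sum>i\<in>{i. (j, i) \<in> E}. fp (j, i)) - (\<Sum>v\<in>{v. (v, j) \<in> E}. f (v, j))"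

text \<open>Number of unit changes still admissible on an incident entry of node j
  (increments for an outgoing edge up to floor u, decrements of the perceived flow of an
  incoming edge down to ceil l).\<close>
definition room :: "('v \<times> 'v \<Rightarrow> real) \<Rightarrow> ('v \<times> 'v \<Rightarrow> real) \<Rightarrow> ('v \<times> 'v \<Rightarrow> int)
    \<Rightarrow> ('v \<times> 'v \<Rightarrow> int) \<Rightarrow> 'v \<Rightarrow> 'v inc \<Rightarrow> int" where
  "room l u f fp j e = (case e of OutE v \<Rightarrow> \<lfloor>u (v, j)\<rfloor> - f (v, j)
                                | InE v \<Rightarrow> fp (j, v) - \<lceil>l (j, v)\<rceil>)"

text \<open>Cyclic traversal: trav r xs p b t = (unit counts per entry, total count) after t visits,
  starting at position p of the cyclic order xs, with room r and target b.\<close>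
primrec trav :: "('a \<Rightarrow> int) \<Rightarrow> 'a list \<Rightarrow> nat \<Rightarrow> int \<Rightarrow> nat \<Rightarrow> ('a \<Rightarrow> int) \<times> int" where
  "trav r xs p b 0 = ((\<lambda>_. 0), 0)"
| "trav r xs p b (Suc t) =
     (let cs = trav r xs p b t; c = fst cs; s = snd cs; e = xs ! ((p + t) mod length xs) in
      if s < b \<and> c e < r e then (c(e := c e + 1), s + 1) else (c, s))"

text \<open>Unit counts chosen by node j in step (2) (pointer p).  length xs * b visits suffice
  for the traversal to stop whenever it stops at all.\<close>
definition units :: "('v \<times> 'v \<Rightarrow> real) \<Rightarrow> ('v \<times> 'v \<Rightarrow> real) \<Rightarrow> ('v \<times> 'v) set
    \<Rightarrow> ('v \<Rightarrow> 'v inc list) \<Rightarrow> ('v \<times> 'v \<Rightarrow> int) \<Rightarrow> ('v \<times> 'v \<Rightarrow> int) \<Rightarrow> nat \<Rightarrow> 'v \<Rightarrow> 'v inc \<Rightarrow> int" where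
  "units l u E ord f fp p j =
     (let b = pbal E f fp j in
      if b > 0 then fst (trav (room l u f fp j) (ord j) p b (length (ord j) * nat b))
      else (\<lambda>_. 0))"

text \<open>New pointer: the entry following the one at which the last unit change was made.\<close>
definition newptr :: "('v \<times> 'v \<Rightarrow> real) \<Rightarrow> ('v \<times> 'v \<Rightarrow> real) \<Rightarrow> ('v \<times> 'v) set
    \<Rightarrow> ('v \<Rightarrow> 'v inc list) \<Rightarrow> ('v \<times> 'v \<Rightarrow> int) \<Rightarrow> ('v \<times> 'v \<Rightarrow> int) \<Rightarrow> nat \<Rightarrow> 'v \<Rightarrow> nat" where
  "newptr l u E ord f fp p j =
     (let b = pbal E f fp j in
      if b > 0 then (p + (LEAST t. snd (trav (room l u f fp j) (ord j) p b t) = b)) mod length (ord j)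
      else p)"

text \<open>A run of Algorithm 1 with initial pointers p0 and delays dT (messages from the tail i
  to the head j of edge (j,i), i.e. the values c^(i)_ji) and dH (messages from the head j to
  the tail i, i.e. the values c^(j)_ji), sent at step k on edge e and delivered at step k + delay.
  tchg k (j,i) = c^(i)_ji[k] (change by the tail to its actual flow),
  hchg k (j,i) = c^(j)_ji[k] (change by the head to its perceived flow).\<close>
definition is_run :: "('v \<times> 'v \<Rightarrow> real) \<Rightarrow> ('v \<times> 'v \<Rightarrow> real) \<Rightarrow> ('v \<times> 'v) set
    \<Rightarrow> ('v \<Rightarrow> 'v inc list) \<Rightarrow> ('v \<Rightarrow> nat) \<Rightarrow> (nat \<Rightarrow> 'v \<times> 'v \<Rightarrow> nat) \<Rightarrow> (nat \<Rightarrow> 'v \<times> 'v \<Rightarrow> nat)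
    \<Rightarrow> (nat \<Rightarrow> 'v \<times> 'v \<Rightarrow> int) \<Rightarrow> (nat \<Rightarrow> 'v \<times> 'v \<Rightarrow> int) \<Rightarrow> (nat \<Rightarrow> 'v \<Rightarrow> nat) \<Rightarrow> bool" where
  "is_run l u E ord p0 dT dH f fp ptr \<longleftrightarrow>
     (let tchg = (\<lambda>k (j, i). units l u E ord (f k) (fp k) (ptr k i) i (OutE j));
          hchg = (\<lambda>k (j, i). - units l u E ord (f k) (fp k) (ptr k j) j (InE i)) in
     (\<forall>e\<in>E. f 0 e = \<lceil>l e\<rceil> \<and> fp 0 e = \<lceil>l e\<rceil>) \<and>
     ptr 0 = p0 \<and>
     (\<forall>k j. ptr (Suc k) j = newptr l u E ord (f k) (fp k) (ptr k j) j) \<and>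
     (\<forall>k. \<forall>e\<in>E.
        f (Suc k) e = proj (l e) (u e)
          (f k e + tchg k e + (\<Sum>k0\<in>{k0. k0 \<le> k \<and> k0 + dH k0 e = k}. hchg k0 e)) \<and>
        fp (Suc k) e = proj (l e) (u e)
          (fp k e + hchg k e + (\<Sum>k0\<in>{k0. k0 \<le> k \<and> k0 + dT k0 e = k}. tchg k0 e))))"

end

theory Submission
  imports Defs
begin

lemma trav_Suc: "trav r xs p b (Suc t) =
     (let c = fst (trav r xs p b t); s = snd (trav r xs p b t); e = xs ! ((p + t) mod length xs) in
      if s < b \<and> c e < r e then (c(e := c e + 1), s + 1) else (c, s))"
  by (simp add: Let_def)

lemma trav_fst_nonneg: "0 \<le> fst (trav r xs p b t) e"
  by (induction t) (auto simp: Let_def)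

lemma trav_fst_le: "fst (trav r xs p b t) e \<le> max 0 (r e)"
  by (induction t) (auto simp: Let_def)

lemma trav_snd_le: "snd (trav r xs p b t) \<le> max 0 b"
  by (induction t) (auto simp: Let_def)

lemma trav_mono_Suc: "fst (trav r xs p b t) e \<le> fst (trav r xs p b (Suc t)) e"
  by (auto simp: Let_def)

lemma trav_mono: "t \<le> t' \<Longrightarrow> fst (trav r xs p b t) e \<le> fst (trav r xs p b t') e"
proof (induction t' )
  case 0 then show ?case by simp
next
  case (Suc t')
  then show ?case
    by (metis le_Suc_eq order_trans trav_mono_Suc order_refl)
qed

lemma trav_sum:
  assumes "finite A" "xs \<noteq> []" "set xs \<subseteq> A"
  shows "(\<Sum>e\<in>A. fst (trav r xs p b t) e) = snd (trav r xs p b t)"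
proof (induction t)
  case 0 then show ?case by simp
next
  case (Suc t)
  define c where "c = fst (trav r xs p b t)"
  define e where "e = xs ! ((p + t) mod length xs)"
  have eA: "e \<in> A" using assms unfolding e_def by (auto intro!: nth_mem)
  have "(\<Sum>x\<in>A. (c(e := c e + 1)) x) = (\<Sum>x\<in>A. c x) + 1"
  proof -
    have "(\<Sum>x\<in>A. (c(e := c e + 1)) x) = (c(e := c e + 1)) e + (\<Sum>x\<in>A - {e}. (c(e := c e + 1)) x)"
      using assms(1) eA by (simp add: sum.remove)
    also have "(\<Sum>x\<in>A - {e}. (c(e := c e + 1)) x) = (\<Sum>x\<in>A - {e}. c x)"
      by (rule sum.cong) auto
    also have "(\<Sum>x\<in>A. c x) = c e + (\<Sum>x\<in>A - {e}. c x)"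
      using assms(1) eA by (simp add: sum.remove)
    ultimately show ?thesis by simp
  qed
  then show ?case using Suc unfolding c_def e_def by (auto simp: Let_def)
qed

lemma proj_range: "\<lceil>lo\<rceil> \<le> \<lfloor>up\<rfloor> \<Longrightarrow> \<lceil>lo\<rceil> \<le> proj lo up x \<and> proj lo up x \<le> \<lfloor>up\<rfloor>"
  by (auto simp: proj_def)

lemma proj_id: "\<lceil>lo\<rceil> \<le> x \<Longrightarrow> x \<le> \<lfloor>up\<rfloor> \<Longrightarrow> proj lo up x = x"
  by (auto simp: proj_def)

lemma units_nonneg: "0 \<le> units l u E ord F Fp p j x"
  by (auto simp: units_def Let_def trav_fst_nonneg)

lemma units_le: "units l u E ord F Fp p j x \<le> max 0 (room l u F Fp j x)"
  by (auto simp: units_def Let_def trav_fst_le)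

lemma units_zero: "\<not> 0 < pbal E F Fp j \<Longrightarrow> units l u E ord F Fp p j x = 0"
  by (auto simp: units_def Let_def)

locale alg =
  fixes V :: "'v set" and E :: "('v \<times> 'v) set"
    and l u :: "'v \<times> 'v \<Rightarrow> real"
    and ord :: "'v \<Rightarrow> 'v inc list" and p0 :: "'v \<Rightarrow> nat"
    and taubar :: nat and dT dH :: "nat \<Rightarrow> 'v \<times> 'v \<Rightarrow> nat"
    and f fp :: "nat \<Rightarrow> 'v \<times> 'v \<Rightarrow> int" and ptr :: "nat \<Rightarrow> 'v \<Rightarrow> nat"
  assumes finV: "finite V"
    and EV: "E \<subseteq> V \<times> V" and noloop: "\<forall>v. (v, v) \<notin> E"
    and ord_ok: "\<forall>j\<in>V. distinct (ord j) \<and> set (ord j) = incident E j"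
    and delays: "\<forall>k e. dT k e \<le> taubar \<and> dH k e \<le> taubar"
    and circ_i: "\<forall>e\<in>E. \<lceil>l e\<rceil> \<le> \<lfloor>u e\<rfloor>"
    and circ_ii: "\<forall>S\<subseteq>V. (\<Sum>e\<in>{(j, i) \<in> E. j \<in> S \<and> i \<notin> S}. \<lceil>l e\<rceil>)
                         \<le> (\<Sum>e\<in>{(v, j) \<in> E. j \<in> S \<and> v \<notin> S}. \<lfloor>u e\<rfloor>)"
    and run: "is_run l u E ord p0 dT dH f fp ptr"
begin

definition a :: "nat \<Rightarrow> 'v \<times> 'v \<Rightarrow> int" where
  "a k = (\<lambda>(j, i). units l u E ord (f k) (fp k) (ptr k i) i (OutE j))"
definition h :: "nat \<Rightarrow> 'v \<times> 'v \<Rightarrow> int" where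
  "h k = (\<lambda>(j, i). units l u E ord (f k) (fp k) (ptr k j) j (InE i))"

definition Tdel where "Tdel k e = (\<Sum>k0\<in>{k0. k0 \<le> k \<and> k0 + dT k0 e = k}. a k0 e)"
definition Hdel where "Hdel k e = (\<Sum>k0\<in>{k0. k0 \<le> k \<and> k0 + dH k0 e = k}. h k0 e)"

abbreviation Lc where "Lc e \<equiv> \<lceil>l e\<rceil>"
abbreviation Uc where "Uc e \<equiv> \<lfloor>u e\<rfloor>"

lemma a_nonneg: "0 \<le> a k e" by (cases e) (simp add: a_def units_nonneg)
lemma h_nonneg: "0 \<le> h k e" by (cases e) (simp add: h_def units_nonneg)
lemma Tdel_nonneg: "0 \<le> Tdel k e" unfolding Tdel_def by (rule sum_nonneg) (simp add: a_nonneg)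
lemma Hdel_nonneg: "0 \<le> Hdel k e" unfolding Hdel_def by (rule sum_nonneg) (simp add: h_nonneg)

lemma f0: "e \<in> E \<Longrightarrow> f 0 e = Lc e \<and> fp 0 e = Lc e"
  using run by (auto simp: is_run_def Let_def)

lemma ptr_Suc: "ptr (Suc k) j = newptr l u E ord (f k) (fp k) (ptr k j) j"
  using run by (auto simp: is_run_def Let_def)

lemma f_Suc: "e \<in> E \<Longrightarrow> f (Suc k) e = proj (l e) (u e) (f k e + a k e - Hdel k e)"
proof -
  assume e: "e \<in> E"
  have "f (Suc k) e = proj (l e) (u e) (f k e + a k e + (\<Sum>k0\<in>{k0. k0 \<le> k \<and> k0 + dH k0 e = k}. - h k0 e))"
    using run e unfolding is_run_def Let_def a_def h_def by (cases e) auto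
  then show ?thesis by (simp add: Hdel_def sum_negf)
qed

lemma fp_Suc: "e \<in> E \<Longrightarrow> fp (Suc k) e = proj (l e) (u e) (fp k e - h k e + Tdel k e)"
proof -
  assume e: "e \<in> E"
  have "fp (Suc k) e = proj (l e) (u e) (fp k e + - h k e + (\<Sum>k0\<in>{k0. k0 \<le> k \<and> k0 + dT k0 e = k}. a k0 e))"
    using run e unfolding is_run_def Let_def a_def h_def by (cases e) auto
  then show ?thesis by (simp add: Tdel_def)
qed

lemma rng: "e \<in> E \<Longrightarrow> Lc e \<le> f k e \<and> f k e \<le> Uc e \<and> Lc e \<le> fp k e \<and> fp k e \<le> Uc e"
proof (cases k)
  case 0
  assume "e \<in> E" then show ?thesis using f0 circ_i 0 by auto
next
  case (Suc k')
  assume e: "e \<in> E"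
  show ?thesis using proj_range[OF circ_i[rule_format, OF e]] f_Suc[OF e] fp_Suc[OF e] Suc by metis
qed

lemma a_le: "e \<in> E \<Longrightarrow> a k e \<le> Uc e - f k e"
proof -
  assume e: "e \<in> E"
  obtain j i where ji: "e = (j, i)" by (cases e)
  have "a k e \<le> max 0 (room l u (f k) (fp k) i (OutE j))"
    unfolding ji a_def by (simp add: units_le)
  then show ?thesis using rng[OF e, of k] by (simp add: room_def ji)
qed

lemma h_le: "e \<in> E \<Longrightarrow> h k e \<le> fp k e - Lc e"
proof -
  assume e: "e \<in> E"
  obtain j i where ji: "e = (j, i)" by (cases e)
  have "h k e \<le> max 0 (room l u (f k) (fp k) j (InE i))"
    unfolding ji h_def by (simp add: units_le)
  then show ?thesis using rng[OF e, of k] by (simp add: room_def ji)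
qed

definition "A k e = (\<Sum>k0<k. a k0 e)"
definition "AD k e = (\<Sum>k0\<in>{k0. k0 + dT k0 e < k}. a k0 e)"
definition "H k e = (\<Sum>k0<k. h k0 e)"
definition "HD k e = (\<Sum>k0\<in>{k0. k0 + dH k0 e < k}. h k0 e)"

lemma del_split: "{k0. k0 + d k0 < Suc k} = {k0. k0 + d k0 < k} \<union> {k0. k0 \<le> k \<and> k0 + d k0 = k}"
  by auto

lemma fin1: "finite {k0::nat. k0 + d k0 < k}"
  by (rule finite_subset[of _ "{..<k}"]) auto
lemma fin2: "finite {k0::nat. k0 \<le> k \<and> k0 + d k0 = k}"
  by (rule finite_subset[of _ "{..k}"]) auto

lemma AD_Suc: "AD (Suc k) e = AD k e + Tdel k e"
  unfolding AD_def Tdel_def del_split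
  by (rule sum.union_disjoint) (auto intro: fin1 fin2)
lemma HD_Suc: "HD (Suc k) e = HD k e + Hdel k e"
  unfolding HD_def Hdel_def del_split
  by (rule sum.union_disjoint) (auto intro: fin1 fin2)

lemma AD_le: "AD k e \<le> A k e"
  unfolding AD_def A_def by (rule sum_mono2) (auto simp: a_nonneg)
lemma HD_le: "HD k e \<le> H k e"
  unfolding HD_def H_def by (rule sum_mono2) (auto simp: h_nonneg)
lemma A_mono: "A k e \<le> A (Suc k) e" by (simp add: A_def a_nonneg)
lemma H_mono: "H k e \<le> H (Suc k) e" by (simp add: H_def h_nonneg)

lemma repr: "e \<in> E \<Longrightarrow> f k e = Lc e + A k e - HD k e \<and> fp k e = Lc e + AD k e - H k e"
proof (induction k)
  case 0 then show ?case using f0 by (simp add: A_def AD_def H_def HD_def)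
next
  case (Suc k)
  note e = Suc.prems
  note IH = Suc.IH[OF e]
  have x1: "f k e + a k e - Hdel k e = Lc e + A (Suc k) e - HD (Suc k) e"
    using IH by (simp add: A_def HD_Suc)
  have x2: "fp k e - h k e + Tdel k e = Lc e + AD (Suc k) e - H (Suc k) e"
    using IH by (simp add: H_def AD_Suc)
  have u1: "f k e + a k e - Hdel k e \<le> Uc e" using a_le[OF e, of k] Hdel_nonneg[of k e] by simp
  have l1: "Lc e \<le> Lc e + A (Suc k) e - HD (Suc k) e"
    using HD_le[of "Suc k" e] A_mono[of k e] AD_le[of k e] h_le[OF e, of k] IH
    by (simp add: H_def)
  have l2: "Lc e \<le> fp k e - h k e + Tdel k e" using h_le[OF e, of k] Tdel_nonneg[of k e] by simp
  have u2: "Lc e + AD (Suc k) e - H (Suc k) e \<le> Uc e"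
    using AD_le[of "Suc k" e] H_mono[of k e] HD_le[of k e] a_le[OF e, of k] IH
    by (simp add: A_def)
  show ?case using f_Suc[OF e, of k] fp_Suc[OF e, of k] proj_id x1 x2 u1 l1 l2 u2 by metis
qed

lemma nc_f: "e \<in> E \<Longrightarrow> f (Suc k) e = f k e + a k e - Hdel k e"
  using repr[of e k] repr[of e "Suc k"] by (simp add: A_def HD_Suc)
lemma nc_fp: "e \<in> E \<Longrightarrow> fp (Suc k) e = fp k e - h k e + Tdel k e"
  using repr[of e k] repr[of e "Suc k"] by (simp add: H_def AD_Suc)

lemma inflight: "e \<in> E \<Longrightarrow> f k e - fp k e =
   (\<Sum>k0\<in>{k0. k0 < k \<and> \<not> k0 + dT k0 e < k}. a k0 e) + (\<Sum>k0\<in>{k0. k0 < k \<and> \<not> k0 + dH k0 e < k}. h k0 e)"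
proof -
  assume e: "e \<in> E"
  have s1: "A k e = AD k e + (\<Sum>k0\<in>{k0. k0 < k \<and> \<not> k0 + dT k0 e < k}. a k0 e)"
  proof -
    have "{..<k} = {k0. k0 + dT k0 e < k} \<union> {k0. k0 < k \<and> \<not> k0 + dT k0 e < k}" by auto
    moreover have "finite {k0. k0 < k \<and> \<not> k0 + dT k0 e < k}" by auto
    ultimately show ?thesis unfolding A_def AD_def
      using sum.union_disjoint[OF fin1[of "\<lambda>k0. dT k0 e" k], of "{k0. k0 < k \<and> \<not> k0 + dT k0 e < k}" "\<lambda>k0. a k0 e"]
      by (metis (no_types, lifting) disjoint_iff mem_Collect_eq)
  qed
  have s2: "H k e = HD k e + (\<Sum>k0\<in>{k0. k0 < k \<and> \<not> k0 + dH k0 e < k}. h k0 e)"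
  proof -
    have "{..<k} = {k0. k0 + dH k0 e < k} \<union> {k0. k0 < k \<and> \<not> k0 + dH k0 e < k}" by auto
    moreover have "finite {k0. k0 < k \<and> \<not> k0 + dH k0 e < k}" by auto
    ultimately show ?thesis unfolding H_def HD_def
      using sum.union_disjoint[OF fin1[of "\<lambda>k0. dH k0 e" k], of "{k0. k0 < k \<and> \<not> k0 + dH k0 e < k}" "\<lambda>k0. h k0 e"]
      by (metis (no_types, lifting) disjoint_iff mem_Collect_eq)
  qed
  show ?thesis using repr[OF e, of k] s1 s2 by simp
qed

lemma fp_le_f: "e \<in> E \<Longrightarrow> fp k e \<le> f k e"
  using inflight[of e k] by (smt (verit) a_nonneg h_nonneg sum_nonneg)


definition "In j = {i. (j, i) \<in> E}"
definition "Out j = {v. (v, j) \<in> E}"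
abbreviation "pb k j \<equiv> pbal E (f k) (fp k) j"
definition "Uj k j = (\<Sum>i\<in>In j. h k (j, i)) + (\<Sum>v\<in>Out j. a k (v, j))"
definition "Del k j = (\<Sum>i\<in>In j. Tdel k (j, i)) + (\<Sum>v\<in>Out j. Hdel k (v, j))"

lemma finE: "finite E" using finV EV by (meson finite_SigmaI finite_subset)
lemma fin_In: "finite (In j)"
  by (rule finite_subset[of _ "snd ` E"]) (auto simp: In_def finE intro: rev_image_eqI)
lemma fin_Out: "finite (Out j)"
  by (rule finite_subset[of _ "fst ` E"]) (auto simp: Out_def finE intro: rev_image_eqI)

lemma pbal_eq: "pbal E F Fp j = (\<Sum>i\<in>In j. Fp (j, i)) - (\<Sum>v\<in>Out j. F (v, j))"
  by (simp add: pbal_def In_def Out_def)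
lemma bal_eq: "bal E F j = (\<Sum>i\<in>In j. F (j, i)) - (\<Sum>v\<in>Out j. F (v, j))"
  by (simp add: bal_def In_def Out_def)

lemma pb_Suc: "pb (Suc k) j = pb k j - Uj k j + Del k j"
proof -
  have 1: "(\<Sum>i\<in>In j. fp (Suc k) (j, i)) = (\<Sum>i\<in>In j. fp k (j, i)) - (\<Sum>i\<in>In j. h k (j, i)) + (\<Sum>i\<in>In j. Tdel k (j, i))"
  proof -
    have "(\<Sum>i\<in>In j. fp (Suc k) (j, i)) = (\<Sum>i\<in>In j. fp k (j, i) - h k (j, i) + Tdel k (j, i))"
      by (rule sum.cong) (auto simp: In_def nc_fp)
    then show ?thesis by (simp add: sum.distrib sum_subtractf)
  qed
  have 2: "(\<Sum>v\<in>Out j. f (Suc k) (v, j)) = (\<Sum>v\<in>Out j. f k (v, j)) + (\<Sum>v\<in>Out j. a k (v, j)) - (\<Sum>v\<in>Out j. Hdel k (v, j))"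
  proof -
    have "(\<Sum>v\<in>Out j. f (Suc k) (v, j)) = (\<Sum>v\<in>Out j. f k (v, j) + a k (v, j) - Hdel k (v, j))"
      by (rule sum.cong) (auto simp: Out_def nc_f)
    then show ?thesis by (simp add: sum.distrib sum_subtractf)
  qed
  show ?thesis unfolding pbal_eq Uj_def Del_def 1 2 by simp
qed

lemma Del_nonneg: "0 \<le> Del k j"
  unfolding Del_def by (intro add_nonneg_nonneg sum_nonneg) (auto simp: Tdel_nonneg Hdel_nonneg)

lemma incident_eq: "incident E j = OutE ` Out j \<union> InE ` In j"
  by (auto simp: incident_def In_def Out_def)

lemma sum_incident: "(\<Sum>x\<in>incident E j. g x) = (\<Sum>v\<in>Out j. g (OutE v)) + (\<Sum>i\<in>In j. g (InE i))"
proof -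
  have "(\<Sum>x\<in>incident E j. g x) = (\<Sum>x\<in>OutE ` Out j. g x) + (\<Sum>x\<in>InE ` In j. g x)"
    unfolding incident_eq by (rule sum.union_disjoint) (auto simp: fin_In fin_Out)
  also have "(\<Sum>x\<in>OutE ` Out j. g x) = (\<Sum>v\<in>Out j. g (OutE v))"
    by (rule sum.reindex_cong[of OutE]) (auto simp: inj_on_def)
  also have "(\<Sum>x\<in>InE ` In j. g x) = (\<Sum>i\<in>In j. g (InE i))"
    by (rule sum.reindex_cong[of InE]) (auto simp: inj_on_def)
  finally show ?thesis .
qed

lemma fin_incident: "finite (incident E j)"
  unfolding incident_eq by (auto simp: fin_In fin_Out)

lemma Uj_eq: "Uj k j = (\<Sum>x\<in>incident E j. units l u E ord (f k) (fp k) (ptr k j) j x)"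
  unfolding sum_incident Uj_def by (simp add: a_def h_def)

lemma Uj_bounds: "j \<in> V \<Longrightarrow> (if 0 < pb k j then 0 \<le> Uj k j \<and> Uj k j \<le> pb k j else Uj k j = 0)"
proof (cases "0 < pb k j")
  case True
  assume j: "j \<in> V"
  have ne: "ord j \<noteq> []"
  proof
    assume "ord j = []"
    then have "incident E j = {}" using ord_ok j by auto
    then have "In j = {}" "Out j = {}" by (auto simp: incident_eq)
    then have "pb k j = 0" by (simp add: pbal_eq)
    then show False using True by simp
  qed
  have "Uj k j = snd (trav (room l u (f k) (fp k) j) (ord j) (ptr k j) (pb k j) (length (ord j) * nat (pb k j)))"
    unfolding Uj_eq units_def Let_def using True
    by (simp add: trav_sum[OF fin_incident ne] ord_ok j)
  moreover have "0 \<le> Uj k j" unfolding Uj_eq by (rule sum_nonneg) (simp add: units_nonneg)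
  ultimately show ?thesis using True trav_snd_le by (smt (verit))
next
  case False
  then show ?thesis unfolding Uj_eq by (simp add: units_zero)
qed

lemma pb_Suc_ge: "j \<in> V \<Longrightarrow> min (pb k j) 0 + Del k j \<le> pb (Suc k) j"
  using Uj_bounds[of j k] pb_Suc[of k j] by (auto split: if_splits)
lemma pb_Suc_nonpos: "j \<in> V \<Longrightarrow> pb k j \<le> 0 \<Longrightarrow> pb (Suc k) j = pb k j + Del k j"
  using Uj_bounds[of j k] pb_Suc[of k j] by (auto split: if_splits)

definition "Dm k = (\<Sum>j\<in>V. max (- pb k j) 0)"

lemma Dm_nonneg: "0 \<le> Dm k" unfolding Dm_def by (rule sum_nonneg) auto

lemma term_mono: "j \<in> V \<Longrightarrow> max (- pb (Suc k) j) 0 \<le> max (- pb k j) 0"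
  using pb_Suc_ge[of j k] Del_nonneg[of k j] by (smt (verit))

lemma Dm_mono_Suc: "Dm (Suc k) \<le> Dm k"
  unfolding Dm_def
  by (rule sum_mono) (rule term_mono)

lemma Dm_strict: "j \<in> V \<Longrightarrow> pb k j < 0 \<Longrightarrow> 0 < Del k j \<Longrightarrow> Dm (Suc k) < Dm k"
  unfolding Dm_def
proof (rule sum_strict_mono_ex1[OF finV])
  show "\<forall>x\<in>V. max (- pb (Suc k) x) 0 \<le> max (- pb k x) 0"
    using term_mono by blast
  assume "j \<in> V" "pb k j < 0" "0 < Del k j"
  then show "\<exists>a\<in>V. max (- pb (Suc k) a) 0 < max (- pb k a) 0"
    using pb_Suc_nonpos[of j k] by (intro bexI[of _ j]) auto
qed

lemma Dm_mono: "k \<le> k' \<Longrightarrow> Dm k' \<le> Dm k"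
  by (induction k' rule: dec_induct) (auto intro: order_trans[OF Dm_mono_Suc])

lemma Dm_stable: "\<exists>K1. \<forall>k\<ge>K1. Dm k = Dm K1"
proof -
  obtain K1 where K1: "\<forall>k. nat (Dm K1) \<le> nat (Dm k)"
    using ex_has_least_nat[of "\<lambda>k. True" 0 "\<lambda>k. nat (Dm k)"] by auto
  have "\<forall>k\<ge>K1. Dm k = Dm K1"
    using K1 Dm_mono Dm_nonneg by (smt (verit) nat_le_eq_zle)
  then show ?thesis by blast
qed


lemma ptr_descent:
  assumes j: "j \<in> V" and x: "x \<in> set (ord j)"
    and rpos: "\<forall>k\<ge>K. 0 < room l u (f k) (fp k) j x"
    and uz: "\<forall>k\<ge>K. units l u E ord (f k) (fp k) (ptr k j) j x = 0"
    and inf: "\<forall>K'. \<exists>k\<ge>K'. 0 < pb k j"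
  shows False
proof -
  define n where "n = length (ord j)"
  have n: "0 < n" using x by (auto simp: n_def length_pos_if_in_set)
  obtain pos where pos: "pos < n" "ord j ! pos = x" using x by (auto simp: in_set_conv_nth n_def)
  define d where "d k = (int pos - int (ptr k j)) mod int n" for k
  have d_nonneg: "0 \<le> d k" for k using n by (simp add: d_def)
  have d_lt: "d k < int n" for k using n by (simp add: d_def)
  have dstep: "d (Suc k) \<le> d k \<and> (0 < pb k j \<longrightarrow> d (Suc k) < d k)" if kK: "K \<le> k" for k
  proof (cases "0 < pb k j")
    case False
    then have "ptr (Suc k) j = ptr k j" by (simp add: ptr_Suc newptr_def Let_def)
    then show ?thesis using False by (simp add: d_def)
  next
    case True
    define b where "b = pb k j"
    define p where "p = ptr k j"
    define R where "R = room l u (f k) (fp k) j"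
    define tr where "tr t = trav R (ord j) p b t" for t
    have b0: "0 < b" using True b_def by simp
    have uz': "fst (tr (n * nat b)) x = 0"
      using uz[rule_format, OF kK] True by (simp add: units_def Let_def tr_def b_def p_def R_def n_def)
    define dd where "dd = nat (d k)"
    have dd: "dd < n" "int dd = d k" using d_nonneg[of k] d_lt[of k] by (auto simp: dd_def)
    have posdd: "(p + dd) mod n = pos"
    proof -
      have "int ((p + dd) mod n) = (int p + d k) mod int n" by (simp add: zmod_int dd(2))
      also have "\<dots> = (int p + (int pos - int p)) mod int n" by (simp add: d_def p_def mod_add_right_eq)
      also have "\<dots> = int pos" using pos by simp
      finally show ?thesis by simp
    qed
    have le_big: "Suc dd \<le> n * nat b"
    proof -
      have "1 \<le> nat b" using b0 by simp
      then have "n * 1 \<le> n * nat b" by (rule mult_le_mono2)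
      then show ?thesis using dd(1) by linarith
    qed
    have sdd: "snd (tr dd) = b"
    proof (rule ccontr)
      assume ne: "snd (tr dd) \<noteq> b"
      have "snd (tr dd) \<le> b" using trav_snd_le[of R "ord j" p b dd] b0 by (simp add: tr_def)
      with ne have lt: "snd (tr dd) < b" by simp
      have c0: "fst (tr dd) x = 0"
        using trav_mono[of dd "n * nat b" R "ord j" p b x] trav_fst_nonneg[of R "ord j" p b dd x] uz' le_big
        by (simp add: tr_def)
      have Rx: "0 < R x" using rpos kK by (simp add: R_def)
      have "fst (tr (Suc dd)) x = 1"
        using lt c0 Rx posdd pos by (simp add: tr_def Let_def n_def)
      moreover have "fst (tr (Suc dd)) x \<le> fst (tr (n * nat b)) x"
        unfolding tr_def by (rule trav_mono[OF le_big])
      ultimately show False using uz' by simp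
    qed
    define t where "t = (LEAST t. snd (tr t) = b)"
    have t_le: "t \<le> dd" unfolding t_def using sdd by (rule Least_le)
    have "snd (tr t) = b" unfolding t_def using sdd by (rule LeastI)
    then have t_pos: "0 < t" using b0 by (cases t) (auto simp: tr_def)
    have ptrS: "ptr (Suc k) j = (p + t) mod n"
      using True by (simp add: ptr_Suc newptr_def Let_def t_def tr_def b_def p_def R_def n_def)
    have "d (Suc k) = (int pos - (int p + int t)) mod int n"
      unfolding d_def ptrS by (simp add: zmod_int mod_diff_right_eq)
    also have "\<dots> = (d k - int t) mod int n"
      unfolding d_def p_def by (simp add: mod_diff_left_eq algebra_simps)
    also have "\<dots> = d k - int t" using t_le dd d_lt[of k] by (intro mod_pos_pos_trivial) auto
    finally show ?thesis using t_pos by simp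
  qed
  have mono: "d k' \<le> d k" if "K \<le> k" "k \<le> k'" for k k'
    using that(2,1)
  proof (induction k' rule: dec_induct)
    case base then show ?case by simp
  next
    case (step m) then show ?case using dstep[of m] by simp
  qed
  have "\<exists>k\<ge>K. d k \<le> d K - int m" for m
  proof (induction m)
    case 0 then show ?case by auto
  next
    case (Suc m)
    then obtain k where k: "K \<le> k" "d k \<le> d K - int m" by auto
    obtain k' where k': "k \<le> k'" "0 < pb k' j" using inf by auto
    have "d (Suc k') < d k'" using dstep[of k'] k k' by simp
    moreover have "d k' \<le> d k" using mono k k' by simp
    ultimately show ?case using k k' by (intro exI[of _ "Suc k'"]) auto
  qed
  from this[of "nat (d K) + 1"] obtain k where "d k \<le> d K - int (nat (d K) + 1)" by auto
  then show False using d_nonneg[of k] d_nonneg[of K] by simp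
qed


lemma dc_in: "finite S \<Longrightarrow> (\<Sum>j\<in>S. \<Sum>i\<in>In j. g (j, i)) = (\<Sum>e\<in>{e\<in>E. fst e \<in> S}. g e)"
proof -
  assume S: "finite S"
  have "(\<Sum>j\<in>S. \<Sum>i\<in>In j. g (j, i)) = (\<Sum>(j, i)\<in>Sigma S In. g (j, i))"
    by (rule sum.Sigma) (auto simp: S fin_In)
  also have "Sigma S In = {e\<in>E. fst e \<in> S}" by (auto simp: In_def)
  finally show ?thesis by (simp add: case_prod_beta')
qed

lemma dc_out: "finite S \<Longrightarrow> (\<Sum>j\<in>S. \<Sum>v\<in>Out j. g (v, j)) = (\<Sum>e\<in>{e\<in>E. snd e \<in> S}. g e)"
proof -
  assume S: "finite S"
  have "(\<Sum>j\<in>S. \<Sum>v\<in>Out j. g (v, j)) = (\<Sum>(j, v)\<in>Sigma S Out. g (v, j))"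
    by (rule sum.Sigma) (auto simp: S fin_Out)
  also have "\<dots> = (\<Sum>e\<in>prod.swap ` Sigma S Out. g e)"
    by (subst sum.reindex) (auto simp: case_prod_beta' prod.swap_def)
  also have "prod.swap ` Sigma S Out = {e\<in>E. snd e \<in> S}" by (auto simp: Out_def image_iff)
  finally show ?thesis .
qed

lemma fstV: "{e\<in>E. fst e \<in> V} = E" using EV by auto
lemma sndV: "{e\<in>E. snd e \<in> V} = E" using EV by auto

lemma sum_pb: "(\<Sum>j\<in>V. pb k j) = (\<Sum>e\<in>E. fp k e) - (\<Sum>e\<in>E. f k e)"
  unfolding pbal_eq sum_subtractf
  using dc_in[OF finV, of "fp k"] dc_out[OF finV, of "f k"] fstV sndV by simp

lemma sum_bal: "(\<Sum>j\<in>V. bal E (f k) j) = 0"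
  unfolding bal_eq sum_subtractf
  using dc_in[OF finV, of "f k"] dc_out[OF finV, of "f k"] fstV sndV by simp

lemma zero_case:
  assumes K1: "\<forall>k\<ge>K1. Dm k = 0"
  shows "\<forall>k\<ge>K1. (\<forall>e\<in>E. f k e = f K1 e \<and> l e \<le> real_of_int (f k e) \<and> real_of_int (f k e) \<le> u e)
                    \<and> (\<forall>j\<in>V. bal E (f k) j = 0)"
proof -
  have eqs: "(\<forall>j\<in>V. pb k j = 0) \<and> (\<forall>e\<in>E. f k e = fp k e)" if k: "K1 \<le> k" for k
  proof -
    have "\<forall>j\<in>V. max (- pb k j) 0 = 0"
      using K1 k finV unfolding Dm_def by (subst sum_nonneg_eq_0_iff[symmetric]) auto
    then have nn: "\<forall>j\<in>V. 0 \<le> pb k j" by auto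
    then have "0 \<le> (\<Sum>j\<in>V. pb k j)" by (simp add: sum_nonneg)
    then have "(\<Sum>e\<in>E. f k e - fp k e) \<le> 0" using sum_pb[of k] by (simp add: sum_subtractf)
    moreover have "\<forall>e\<in>E. 0 \<le> f k e - fp k e" using fp_le_f by auto
    ultimately have z: "\<forall>e\<in>E. f k e - fp k e = 0"
      using sum_nonneg_eq_0_iff[OF finE] by (smt (verit) sum_nonneg)
    then have "(\<Sum>j\<in>V. pb k j) = 0" using sum_pb[of k] by (simp add: sum_subtractf[symmetric])
    then have "\<forall>j\<in>V. pb k j = 0" using sum_nonneg_eq_0_iff[OF finV] nn by blast
    then show ?thesis using z by auto
  qed
  have const: "f (Suc k) e = f k e" if k: "K1 \<le> k" and e: "e \<in> E" for k e
  proof -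
    obtain j i where ji: "e = (j, i)" by (cases e)
    have ij: "i \<in> V" "j \<in> V" using EV e ji by auto
    have "a k e = 0" unfolding ji a_def using eqs[OF k] ij by (simp add: units_zero)
    moreover have "h k e = 0" unfolding ji h_def using eqs[OF k] ij by (simp add: units_zero)
    ultimately have "f (Suc k) e \<le> f k e" "fp k e \<le> fp (Suc k) e"
      using nc_f[OF e, of k] nc_fp[OF e, of k] Hdel_nonneg[of k e] Tdel_nonneg[of k e] by auto
    moreover have "f (Suc k) e = fp (Suc k) e" "f k e = fp k e" using eqs k e by auto
    ultimately show ?thesis by simp
  qed
  have fK: "f k e = f K1 e" if "K1 \<le> k" "e \<in> E" for k e
    using that(1)
  proof (induction k rule: dec_induct)
    case base then show ?case by simp
  next
    case (step m) then show ?case using const[of m e] that(2) by simp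
  qed
  have b1: "l e \<le> real_of_int (f k e) \<and> real_of_int (f k e) \<le> u e" if e: "e \<in> E" for k e
  proof -
    have "real_of_int (Lc e) \<le> real_of_int (f k e)" "real_of_int (f k e) \<le> real_of_int (Uc e)"
      using rng[OF e, of k] by simp_all
    then show ?thesis using le_of_int_ceiling[of "l e"] of_int_floor_le[of "u e"] by linarith
  qed
  have b2: "bal E (f k) j = 0" if k: "K1 \<le> k" and j: "j \<in> V" for k j
  proof -
    have "bal E (f k) j = pb k j"
      unfolding bal_eq pbal_eq using eqs[OF k] by (auto simp: In_def intro!: sum.cong)
    then show ?thesis using eqs[OF k] j by simp
  qed
  show ?thesis using fK b1 b2 by blast
qed


lemma a_le_Tdel: "a k e \<le> Tdel (k + dT k e) e"
  unfolding Tdel_def by (rule member_le_sum) (auto simp: a_nonneg intro: fin2)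
lemma h_le_Hdel: "h k e \<le> Hdel (k + dH k e) e"
  unfolding Hdel_def by (rule member_le_sum) (auto simp: h_nonneg intro: fin2)
lemma Tdel_le_Del: "(j, i) \<in> E \<Longrightarrow> Tdel k (j, i) \<le> Del k j"
proof -
  assume "(j, i) \<in> E"
  then have "Tdel k (j, i) \<le> (\<Sum>i\<in>In j. Tdel k (j, i))"
    by (intro member_le_sum) (auto simp: In_def Tdel_nonneg fin_In[unfolded In_def])
  moreover have "0 \<le> (\<Sum>v\<in>Out j. Hdel k (v, j))" by (simp add: sum_nonneg Hdel_nonneg)
  ultimately show ?thesis by (simp add: Del_def)
qed
lemma Hdel_le_Del: "(v, j) \<in> E \<Longrightarrow> Hdel k (v, j) \<le> Del k j"
proof -
  assume "(v, j) \<in> E"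
  then have "Hdel k (v, j) \<le> (\<Sum>v\<in>Out j. Hdel k (v, j))"
    by (intro member_le_sum) (auto simp: Out_def Hdel_nonneg fin_Out[unfolded Out_def])
  moreover have "0 \<le> (\<Sum>i\<in>In j. Tdel k (j, i))" by (simp add: sum_nonneg Tdel_nonneg)
  ultimately show ?thesis by (simp add: Del_def)
qed

lemma pos_case:
  assumes K1: "\<forall>k\<ge>K1. Dm k = Dm K1" and pos: "0 < Dm K1"
  shows False
proof -
  have noDel: "Del k j = 0" if "K1 \<le> k" "j \<in> V" "pb k j < 0" for k j
  proof (rule ccontr)
    assume "Del k j \<noteq> 0"
    then have "0 < Del k j" using Del_nonneg[of k j] by simp
    then have "Dm (Suc k) < Dm k" using Dm_strict that by blast
    then show False using K1[rule_format, of k] K1[rule_format, of "Suc k"] that(1) by simp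
  qed
  define Q where "Q = {j\<in>V. \<forall>K. \<exists>k\<ge>K. 0 < pb k j}"
  have QV: "Q \<subseteq> V" by (auto simp: Q_def)
  have "\<forall>j\<in>V-Q. \<exists>K. \<forall>k\<ge>K. pb k j \<le> 0" by (auto simp: Q_def not_less)
  then obtain g where g: "\<forall>j\<in>V-Q. \<forall>k\<ge>g j. pb k j \<le> 0" by metis
  define K2 where "K2 = K1 + (\<Sum>j\<in>V-Q. g j)"
  have K12: "K1 \<le> K2" by (simp add: K2_def)
  have F1: "pb k j \<le> 0" if "j \<in> V - Q" "K2 \<le> k" for j k
  proof -
    have "g j \<le> (\<Sum>j\<in>V-Q. g j)" using that(1) finV by (intro member_le_sum) auto
    then show ?thesis using g that unfolding K2_def by auto
  qed
  have F2: "Del k j = 0" if j: "j \<in> V - Q" and k: "K2 \<le> k" for j k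
  proof (cases "pb k j < 0")
    case True then show ?thesis using noDel K12 k j by auto
  next
    case False
    then have "pb k j = 0" using F1[OF j k] by simp
    then have "pb (Suc k) j = Del k j" using pb_Suc_nonpos[of j k] j by simp
    then show ?thesis using F1[OF j, of "Suc k"] k Del_nonneg[of k j] by simp
  qed
  have F3: "0 \<le> pb k j" if j: "j \<in> Q" and k: "K1 \<le> k" for j k
  proof (rule ccontr)
    assume neg: "\<not> 0 \<le> pb k j"
    have jV: "j \<in> V" using j QV by auto
    have "pb (k + m) j = pb k j" for m
    proof (induction m)
      case 0 then show ?case by simp
    next
      case (Suc m)
      have "Del (k + m) j = 0" using noDel[of "k + m" j] Suc neg k jV by simp
      then show ?case using pb_Suc_nonpos[of j "k + m"] Suc neg jV by simp
    qed
    moreover obtain k' where "k \<le> k'" "0 < pb k' j" using j by (auto simp: Q_def)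
    ultimately show False using neg by (metis le_add_diff_inverse less_le_not_le)
  qed
  have F4: "a k (j, i) = 0 \<and> h k (j, i) = 0" if e: "(j, i) \<in> E" and nb: "\<not> (j \<in> Q \<and> i \<in> Q)" and k: "K2 \<le> k" for j i k
  proof -
    have ij: "i \<in> V" "j \<in> V" using EV e by auto
    have "a k (j, i) = 0"
    proof (cases "i \<in> Q")
      case False
      then show ?thesis using F1[of i k] ij k by (simp add: a_def units_zero)
    next
      case True
      then have "j \<notin> Q" using nb by simp
      then have "Del (k + dT k (j, i)) j = 0" using F2 ij k by simp
      then show ?thesis using a_le_Tdel[of k "(j, i)"] Tdel_le_Del[OF e, of "k + dT k (j, i)"] a_nonneg[of k "(j, i)"]
        by simp
    qed
    moreover have "h k (j, i) = 0"
    proof (cases "j \<in> Q")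
      case False
      then show ?thesis using F1[of j k] ij k by (simp add: h_def units_zero)
    next
      case True
      then have "i \<notin> Q" using nb by simp
      then have "Del (k + dH k (j, i)) i = 0" using F2 ij k by simp
      then show ?thesis using h_le_Hdel[of k "(j, i)"] Hdel_le_Del[OF e, of "k + dH k (j, i)"] h_nonneg[of k "(j, i)"]
        by simp
    qed
    ultimately show ?thesis by simp
  qed
  define K3 where "K3 = K2 + taubar + 1"
  have F4': "a k0 e = 0 \<and> h k0 e = 0" if "e \<in> E" "\<not> (fst e \<in> Q \<and> snd e \<in> Q)" "K2 \<le> k0" for e k0
  proof -
    obtain j i where ji: "e = (j, i)" by (cases e)
    show ?thesis using F4[of j i k0] that unfolding ji by simp
  qed
  have F5: "f k e = fp k e" if e: "e \<in> E" and nb: "\<not> (fst e \<in> Q \<and> snd e \<in> Q)" and k: "K3 \<le> k" for e k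
  proof -
    have "(\<Sum>k0\<in>{k0. k0 < k \<and> \<not> k0 + dT k0 e < k}. a k0 e) = 0"
    proof (rule sum.neutral, clarify)
      fix k0 assume "k0 < k" "\<not> k0 + dT k0 e < k"
      then have "K2 \<le> k0" using delays[rule_format, of k0 e] k unfolding K3_def by linarith
      then show "a k0 e = 0" using F4' e nb by blast
    qed
    moreover have "(\<Sum>k0\<in>{k0. k0 < k \<and> \<not> k0 + dH k0 e < k}. h k0 e) = 0"
    proof (rule sum.neutral, clarify)
      fix k0 assume "k0 < k" "\<not> k0 + dH k0 e < k"
      then have "K2 \<le> k0" using delays[rule_format, of k0 e] k unfolding K3_def by linarith
      then show "h k0 e = 0" using F4' e nb by blast
    qed
    ultimately show ?thesis using inflight[OF e, of k] by simp
  qed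
  have F6: "f (Suc k) e = f k e \<and> fp (Suc k) e = fp k e" if e: "e \<in> E" and nb: "\<not> (fst e \<in> Q \<and> snd e \<in> Q)" and k: "K3 \<le> k" for e k
  proof -
    have "Hdel k e = 0" unfolding Hdel_def
    proof (rule sum.neutral, rule ballI)
      fix k0 assume "k0 \<in> {k0. k0 \<le> k \<and> k0 + dH k0 e = k}"
      then have "K2 \<le> k0" using delays[rule_format, of k0 e] k unfolding K3_def by (simp; linarith)
      then show "h k0 e = 0" using F4' e nb by blast
    qed
    moreover have "Tdel k e = 0" unfolding Tdel_def
    proof (rule sum.neutral, rule ballI)
      fix k0 assume "k0 \<in> {k0. k0 \<le> k \<and> k0 + dT k0 e = k}"
      then have "K2 \<le> k0" using delays[rule_format, of k0 e] k unfolding K3_def by (simp; linarith)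
      then show "a k0 e = 0" using F4' e nb by blast
    qed
    moreover have "a k e = 0 \<and> h k e = 0" using F4' e nb k unfolding K3_def by simp
    ultimately show ?thesis using nc_f[OF e, of k] nc_fp[OF e, of k] by simp
  qed
  have F6': "f k e = f K3 e \<and> fp k e = fp K3 e" if e: "e \<in> E" and nb: "\<not> (fst e \<in> Q \<and> snd e \<in> Q)" and k: "K3 \<le> k" for e k
    using k
  proof (induction k rule: dec_induct)
    case base then show ?case by simp
  next
    case (step m) then show ?case using F6[OF e nb, of m] by simp
  qed
  have F7: "room l u (f K3) (fp K3) j x = 0" if j: "j \<in> Q" and x: "x \<in> incident E j"
       and nb: "\<forall>v. x = OutE v \<or> x = InE v \<longrightarrow> v \<notin> Q" for j x
  proof (rule ccontr)
    assume r0: "room l u (f K3) (fp K3) j x \<noteq> 0"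
    have jV: "j \<in> V" using j QV by auto
    have xs: "x \<in> set (ord j)" using ord_ok jV x by auto
    have keep: "room l u (f k) (fp k) j x = room l u (f K3) (fp K3) j x \<and> 0 \<le> room l u (f k) (fp k) j x
            \<and> units l u E ord (f k) (fp k) (ptr k j) j x = 0" if k: "K3 \<le> k" for k
    proof (cases x)
      case (OutE v)
      then have e: "(v, j) \<in> E" and vQ: "v \<notin> Q" using x nb by (auto simp: incident_def)
      show ?thesis using F6'[OF e _ k] rng[OF e, of k] F4[OF e _, of k] vQ k OutE
        by (auto simp: room_def a_def K3_def)
    next
      case (InE i)
      then have e: "(j, i) \<in> E" and iQ: "i \<notin> Q" using x nb by (auto simp: incident_def)
      show ?thesis using F6'[OF e _ k] rng[OF e, of k] F4[OF e _, of k] iQ k InE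
        by (auto simp: room_def h_def K3_def)
    qed
    have "\<forall>k\<ge>K3. 0 < room l u (f k) (fp k) j x" using keep r0 by (metis order_refl order.not_eq_order_implies_strict)
    moreover have "\<forall>k\<ge>K3. units l u E ord (f k) (fp k) (ptr k j) j x = 0" using keep by blast
    moreover have "\<forall>K'. \<exists>k\<ge>K'. 0 < pb k j" using j by (auto simp: Q_def)
    ultimately show False using ptr_descent[OF jV xs] by blast
  qed
  have finQ: "finite Q" using finV QV by (rule finite_subset[rotated])
  have K13: "K1 \<le> K3" using K12 by (simp add: K3_def)
  have bal_pb: "bal E (f K3) j = pb K3 j" if j: "j \<in> V - Q" for j
    unfolding bal_eq pbal_eq using F5 j by (auto simp: In_def K3_def intro!: sum.cong)
  have "(\<Sum>j\<in>V. bal E (f K3) j) = (\<Sum>j\<in>V - Q. bal E (f K3) j) + (\<Sum>j\<in>Q. bal E (f K3) j)"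
    using sum.subset_diff[OF QV finV] by simp
  then have s1: "(\<Sum>j\<in>Q. bal E (f K3) j) = - (\<Sum>j\<in>V - Q. pb K3 j)"
    using sum_bal[of K3] bal_pb by simp
  have "Dm K3 = (\<Sum>j\<in>V - Q. max (- pb K3 j) 0) + (\<Sum>j\<in>Q. max (- pb K3 j) 0)"
    unfolding Dm_def using sum.subset_diff[OF QV finV] by simp
  also have "(\<Sum>j\<in>Q. max (- pb K3 j) 0) = 0"
    using F3 K13 by (intro sum.neutral) auto
  also have "(\<Sum>j\<in>V - Q. max (- pb K3 j) 0) = (\<Sum>j\<in>V - Q. - pb K3 j)"
  proof (rule sum.cong[OF refl])
    fix j assume "j \<in> V - Q"
    then have "pb K3 j \<le> 0" using F1[of j K3] by (simp add: K3_def)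
    then show "max (- pb K3 j) 0 = - pb K3 j" by simp
  qed
  finally have "Dm K3 = (\<Sum>j\<in>V - Q. - pb K3 j)" by simp
  moreover have "Dm K3 = Dm K1" using K1 K13 by blast
  ultimately have s2: "(\<Sum>j\<in>Q. bal E (f K3) j) = Dm K1"
    using s1 by (simp add: sum_negf)
  define B where "B = {e\<in>E. fst e \<in> Q \<and> snd e \<in> Q}"
  define B1 where "B1 = {e\<in>E. fst e \<in> Q \<and> snd e \<notin> Q}"
  define B2 where "B2 = {e\<in>E. snd e \<in> Q \<and> fst e \<notin> Q}"
  have fins: "finite B" "finite B1" "finite B2"
    unfolding B_def B1_def B2_def using finE by auto
  have u1: "{e\<in>E. fst e \<in> Q} = B \<union> B1" "{e\<in>E. snd e \<in> Q} = B \<union> B2"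
    unfolding B_def B1_def B2_def by auto
  have "(\<Sum>j\<in>Q. bal E (f K3) j) = (\<Sum>e\<in>{e\<in>E. fst e \<in> Q}. f K3 e) - (\<Sum>e\<in>{e\<in>E. snd e \<in> Q}. f K3 e)"
    unfolding bal_eq sum_subtractf using dc_in[OF finQ, of "f K3"] dc_out[OF finQ, of "f K3"] by simp
  also have "\<dots> = (\<Sum>e\<in>B1. f K3 e) - (\<Sum>e\<in>B2. f K3 e)"
    unfolding u1 using fins by (simp add: sum.union_disjoint B_def B1_def B2_def Int_def)
  also have "(\<Sum>e\<in>B1. f K3 e) = (\<Sum>e\<in>B1. Lc e)"
  proof (rule sum.cong[OF refl])
    fix e assume "e \<in> B1"
    then obtain j i where ji: "e = (j, i)" and e: "(j, i) \<in> E" and jQ: "j \<in> Q" and iQ: "i \<notin> Q"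
      unfolding B1_def by (cases e) auto
    have "room l u (f K3) (fp K3) j (InE i) = 0"
      using F7[OF jQ, of "InE i"] e iQ by (auto simp: incident_def)
    then have "fp K3 e = Lc e" by (simp add: room_def ji)
    moreover have "f K3 e = fp K3 e" using F5[of e K3] e iQ ji by simp
    ultimately show "f K3 e = Lc e" by simp
  qed
  also have "(\<Sum>e\<in>B2. f K3 e) = (\<Sum>e\<in>B2. Uc e)"
  proof (rule sum.cong[OF refl])
    fix e assume "e \<in> B2"
    then obtain v j where vj: "e = (v, j)" and e: "(v, j) \<in> E" and jQ: "j \<in> Q" and vQ: "v \<notin> Q"
      unfolding B2_def by (cases e) auto
    have "room l u (f K3) (fp K3) j (OutE v) = 0"
      using F7[OF jQ, of "OutE v"] e vQ by (auto simp: incident_def)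
    then show "f K3 e = Uc e" by (simp add: room_def vj)
  qed
  also have "(\<Sum>e\<in>B1. Lc e) - (\<Sum>e\<in>B2. Uc e) \<le> 0"
  proof -
    have "B1 = {(j, i) \<in> E. j \<in> Q \<and> i \<notin> Q}" "B2 = {(v, j) \<in> E. j \<in> Q \<and> v \<notin> Q}"
      unfolding B1_def B2_def by auto
    then show ?thesis using circ_ii QV by auto
  qed
  finally show False using s2 pos by simp
qed

end

theorem proposition4:
  fixes V :: "'v set" and E :: "('v \<times> 'v) set"
    and l u :: "'v \<times> 'v \<Rightarrow> real"
    and ord :: "'v \<Rightarrow> 'v inc list" and p0 :: "'v \<Rightarrow> nat"
    and taubar :: nat and dT dH :: "nat \<Rightarrow> 'v \<times> 'v \<Rightarrow> nat"
    and f fp :: "nat \<Rightarrow> 'v \<times> 'v \<Rightarrow> int" and ptr :: "nat \<Rightarrow> 'v \<Rightarrow> nat"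
  assumes finV: "finite V" and cardV: "card V \<ge> 2"
    and EV: "E \<subseteq> V \<times> V" and noloop: "\<forall>v. (v, v) \<notin> E"
    and strong: "\<forall>a\<in>V. \<forall>b\<in>V. (a, b) \<in> E\<^sup>*"
    and bounds: "\<forall>e\<in>E. 1 \<le> l e \<and> l e \<le> u e"
    and ord_ok: "\<forall>j\<in>V. distinct (ord j) \<and> set (ord j) = incident E j"
    and p0_ok: "\<forall>j\<in>V. p0 j < length (ord j)"
    and delays: "\<forall>k e. dT k e \<le> taubar \<and> dH k e \<le> taubar"
    and circ_i: "\<forall>e\<in>E. \<lceil>l e\<rceil> \<le> \<lfloor>u e\<rfloor>"
    and circ_ii: "\<forall>S\<subseteq>V. (\<Sum>e\<in>{(j, i) \<in> E. j \<in> S \<and> i \<notin> S}. \<lceil>l e\<rceil>)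
                         \<le> (\<Sum>e\<in>{(v, j) \<in> E. j \<in> S \<and> v \<notin> S}. \<lfloor>u e\<rfloor>)"
    and run: "is_run l u E ord p0 dT dH f fp ptr"
  shows "\<exists>k0. \<forall>k\<ge>k0. (\<forall>e\<in>E. f k e = f k0 e \<and> l e \<le> real_of_int (f k e) \<and> real_of_int (f k e) \<le> u e)
                    \<and> (\<forall>j\<in>V. bal E (f k) j = 0)"
proof -
  interpret alg V E l u ord p0 taubar dT dH f fp ptr
    using finV EV noloop ord_ok delays circ_i circ_ii run by unfold_locales
  obtain K1 where K1: "\<forall>k\<ge>K1. Dm k = Dm K1" using Dm_stable by blast
  have D0: "Dm K1 = 0"
  proof (rule ccontr)
    assume "Dm K1 \<noteq> 0"
    then have "0 < Dm K1" using Dm_nonneg[of K1] by simp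
    then show False using pos_case[OF K1] by blast
  qed
  have "\<forall>k\<ge>K1. Dm k = 0"
  proof (intro allI impI)
    fix k assume "K1 \<le> k"
    then show "Dm k = 0" using K1 D0 by metis
  qed
  then show ?thesis using zero_case by blast
qed

end
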